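(* The functions $F_\iota(r,s,i,j)=j\,L^\iota(r)\,i$, $\iota=1,\dots,n$, form a regular sequence in the coordinate ring $\mathbb{C}[T^*(\mathfrak{b}\times\mathbb{C}^n)^{rss}]$.
   Context: $\mathfrak{b}$ is the space of upper triangular complex $n\times n$ matrices, $\mathfrak{b}^*=\mathfrak{gl}_n/\mathfrak{n}^+$ ($\mathfrak{n}^+$ strictly upper triangular), and $T^*(\mathfrak{b}\times\mathbb{C}^n)^{rss}=\mathfrak{b}^{rss}\times\mathfrak{b}^*\times\mathbb{C}^n\times(\mathbb{C}^n)^*$, where $\mathfrak{b}^{rss}$ is the open set of $r\in\mathfrak{b}$ with pairwise distinct diagonal entries; $i$ is a column vector and $j$ a row vector. $L^\iota(r)=\big[\operatorname{tr}\prod_{k\ne\iota}(r-r_{kk}I)\big]^{-1}\prod_{k\ne\iota}(r-r_{kk}I)$ (the scalar equals $\prod_{k\ne\iota}(r_{\iota\iota}-r_{kk})\neq0$). *)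

theory Defs
  imports Complex_Main
begin

text \<open>Coordinates on T^*(b x C^n): r_{kl} (k \<le> l) on b, s_{kl} (k \<ge> l) on b^* = gl_n/n^+,
  i_k (column vector), j_k (row vector). Indices are 0-based (0..n-1).\<close>
datatype var = Rv nat nat | Sv nat nat | Iv nat | Jv nat

fun valid_var :: "nat \<Rightarrow> var \<Rightarrow> bool" where
  "valid_var n (Rv k l) = (k \<le> l \<and> l < n)"
| "valid_var n (Sv k l) = (l \<le> k \<and> k < n)"
| "valid_var n (Iv k) = (k < n)"
| "valid_var n (Jv k) = (k < n)"

type_synonym point = "var \<Rightarrow> complex"

inductive_set polyfun :: "(point \<Rightarrow> complex) set" where
  pconst: "(\<lambda>v. c) \<in> polyfun"
| pvar: "(\<lambda>v. v x) \<in> polyfun"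
| padd: "p \<in> polyfun \<Longrightarrow> q \<in> polyfun \<Longrightarrow> (\<lambda>v. p v + q v) \<in> polyfun"
| pmult: "p \<in> polyfun \<Longrightarrow> q \<in> polyfun \<Longrightarrow> (\<lambda>v. p v * q v) \<in> polyfun"

definition rmat :: "point \<Rightarrow> nat \<Rightarrow> nat \<Rightarrow> complex" where
  "rmat v a c = (if a \<le> c then v (Rv a c) else 0)"

definition disc :: "nat \<Rightarrow> point \<Rightarrow> complex" where
  "disc n v = (\<Prod>(a,b)\<in>{(a,b). a < b \<and> b < n}. v (Rv a a) - v (Rv b b))"

text \<open>The space T^*(b x C^n)^{rss}: all points, with non-coordinate variables set to 0
  and pairwise distinct diagonal entries of r.\<close>
definition Xrss :: "nat \<Rightarrow> point set" where
  "Xrss n = {v. (\<forall>x. \<not> valid_var n x \<longrightarrow> v x = 0) \<and>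
                (\<forall>a b. a < n \<longrightarrow> b < n \<longrightarrow> a \<noteq> b \<longrightarrow> v (Rv a a) \<noteq> v (Rv b b))}"

text \<open>Regular functions on Xrss (its coordinate ring: polynomials localized at disc),
  represented as functions on Xrss.\<close>
definition regular_fun :: "nat \<Rightarrow> (point \<Rightarrow> complex) \<Rightarrow> bool" where
  "regular_fun n f \<longleftrightarrow> (\<exists>p\<in>polyfun. \<exists>m::nat. \<forall>v\<in>Xrss n. f v = p v / disc n v ^ m)"

definition matmul :: "nat \<Rightarrow> (nat \<Rightarrow> nat \<Rightarrow> complex) \<Rightarrow> (nat \<Rightarrow> nat \<Rightarrow> complex) \<Rightarrow> nat \<Rightarrow> nat \<Rightarrow> complex" where
  "matmul n A B = (\<lambda>a c. \<Sum>b<n. A a b * B b c)"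

definition idmat :: "nat \<Rightarrow> nat \<Rightarrow> complex" where
  "idmat = (\<lambda>a c. if a = c then 1 else 0)"

definition mtrace :: "nat \<Rightarrow> (nat \<Rightarrow> nat \<Rightarrow> complex) \<Rightarrow> complex" where
  "mtrace n A = (\<Sum>a<n. A a a)"

text \<open>prod_{k \<noteq> io} (r - r_{kk} I) (the factors commute).\<close>
definition Pmat :: "nat \<Rightarrow> nat \<Rightarrow> point \<Rightarrow> nat \<Rightarrow> nat \<Rightarrow> complex" where
  "Pmat n io v = foldr (\<lambda>k M. matmul n (\<lambda>a c. rmat v a c - v (Rv k k) * idmat a c) M)
                        (filter (\<lambda>k. k \<noteq> io) [0..<n]) idmat"

definition Lmat :: "nat \<Rightarrow> nat \<Rightarrow> point \<Rightarrow> nat \<Rightarrow> nat \<Rightarrow> complex" where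
  "Lmat n io v = (\<lambda>a c. Pmat n io v a c / mtrace n (Pmat n io v))"

definition Ffun :: "nat \<Rightarrow> nat \<Rightarrow> point \<Rightarrow> complex" where
  "Ffun n io v = (\<Sum>a<n. \<Sum>c<n. v (Jv a) * Lmat n io v a c * v (Iv c))"

definition in_ideal :: "nat \<Rightarrow> (nat \<Rightarrow> point \<Rightarrow> complex) \<Rightarrow> nat \<Rightarrow> (point \<Rightarrow> complex) \<Rightarrow> bool" where
  "in_ideal n F k g \<longleftrightarrow> (\<exists>a. (\<forall>t<k. regular_fun n (a t)) \<and>
       (\<forall>v\<in>Xrss n. g v = (\<Sum>t<k. a t v * F t v)))"

definition regular_sequence :: "nat \<Rightarrow> (nat \<Rightarrow> point \<Rightarrow> complex) \<Rightarrow> nat \<Rightarrow> bool" where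
  "regular_sequence n F m \<longleftrightarrow>
     (\<forall>t<m. regular_fun n (F t)) \<and>
     (\<forall>k<m. \<forall>g. regular_fun n g \<longrightarrow> in_ideal n F k (\<lambda>v. g v * F k v) \<longrightarrow> in_ideal n F k g) \<and>
     \<not> in_ideal n F m (\<lambda>v. 1)"

end

theory Submission
  imports Defs
begin


lemma sum_single:
  assumes "finite A" "d \<in> A" "\<And>b. b \<in> A \<Longrightarrow> b \<noteq> d \<Longrightarrow> f b = 0"
  shows "sum f A = f d"
proof -
  have "sum f A = f d + sum f (A - {d})" using assms by (simp add: sum.remove)
  also have "sum f (A - {d}) = 0" using assms by (intro sum.neutral) auto
  finally show ?thesis by simp
qed

definition meq :: "nat \<Rightarrow> (nat \<Rightarrow> nat \<Rightarrow> complex) \<Rightarrow> (nat \<Rightarrow> nat \<Rightarrow> complex) \<Rightarrow> bool" where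
  "meq n A B \<longleftrightarrow> (\<forall>a<n. \<forall>c<n. A a c = B a c)"

lemma meq_refl: "meq n A A" by (simp add: meq_def)
lemma meq_sym: "meq n A B \<Longrightarrow> meq n B A" by (simp add: meq_def)
lemma meq_trans: "meq n A B \<Longrightarrow> meq n B C \<Longrightarrow> meq n A C" by (simp add: meq_def)

lemmas meq_trans' [trans] = meq_trans
lemma meq_eq_trans [trans]: "meq n A B \<Longrightarrow> B = C \<Longrightarrow> meq n A C" by simp
lemma eq_meq_trans [trans]: "A = B \<Longrightarrow> meq n B C \<Longrightarrow> meq n A C" by simp

lemma matmul_cong: "meq n A A' \<Longrightarrow> meq n B B' \<Longrightarrow> meq n (matmul n A B) (matmul n A' B')"
  by (simp add: meq_def matmul_def)

lemma matmul_assoc: "matmul n (matmul n A B) C = matmul n A (matmul n B C)"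
  unfolding matmul_def
  by (auto simp: sum_distrib_left sum_distrib_right mult.assoc intro!: ext sum.swap[THEN trans])

lemma matmul_idl: "a < n \<Longrightarrow> matmul n idmat B a c = B a c"
  unfolding matmul_def idmat_def by (subst sum_single[of _ a]) auto

lemma matmul_idr: "c < n \<Longrightarrow> matmul n A idmat a c = A a c"
  unfolding matmul_def idmat_def by (subst sum_single[of _ c]) auto

definition RM :: "point \<Rightarrow> nat \<Rightarrow> nat \<Rightarrow> nat \<Rightarrow> complex" where
  "RM v k = (\<lambda>a c. rmat v a c - v (Rv k k) * idmat a c)"

definition prodL :: "nat \<Rightarrow> point \<Rightarrow> nat list \<Rightarrow> nat \<Rightarrow> nat \<Rightarrow> complex" where
  "prodL n v xs = foldr (\<lambda>k M. matmul n (RM v k) M) xs idmat"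

lemma prodL_Nil: "prodL n v [] = idmat" by (simp add: prodL_def)
lemma prodL_Cons: "prodL n v (x # xs) = matmul n (RM v x) (prodL n v xs)" by (simp add: prodL_def)

lemma Pmat_prodL: "Pmat n io v = prodL n v (filter (\<lambda>k. k \<noteq> io) [0..<n])"
  by (simp add: Pmat_def prodL_def RM_def)

lemma foldr_mul: "meq n (foldr (\<lambda>k M. matmul n (RM v k) M) xs B) (matmul n (prodL n v xs) B)"
proof (induction xs)
  case Nil then show ?case by (simp add: prodL_def meq_def matmul_idl)
next
  case (Cons x xs)
  have "meq n (matmul n (RM v x) (foldr (\<lambda>k M. matmul n (RM v k) M) xs B))
           (matmul n (RM v x) (matmul n (prodL n v xs) B))"
    by (rule matmul_cong[OF meq_refl Cons.IH])
  then show ?case by (simp add: prodL_Cons matmul_assoc prodL_def)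
qed

lemma prodL_append: "meq n (prodL n v (xs @ ys)) (matmul n (prodL n v xs) (prodL n v ys))"
  using foldr_mul[of n v xs "prodL n v ys"] by (simp add: prodL_def)

definition upper :: "nat \<Rightarrow> (nat \<Rightarrow> nat \<Rightarrow> complex) \<Rightarrow> bool" where
  "upper n A \<longleftrightarrow> (\<forall>a<n. \<forall>c<n. c < a \<longrightarrow> A a c = 0)"

lemma upper_matmul: assumes "upper n A" "upper n B" shows "upper n (matmul n A B)"
  unfolding upper_def matmul_def
proof (intro allI impI)
  fix a c assume "a < n" "c < n" "c < a"
  show "(\<Sum>b<n. A a b * B b c) = 0"
  proof (rule sum.neutral, intro ballI)
    fix b assume "b \<in> {..<n}"
    then show "A a b * B b c = 0" using assms \<open>a<n\<close> \<open>c<n\<close> \<open>c<a\<close> unfolding upper_def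
      by (cases "b < a") auto
  qed
qed

lemma upper_RM: "upper n (RM v k)"
  by (simp add: upper_def RM_def rmat_def idmat_def)

lemma upper_idmat: "upper n idmat" by (simp add: upper_def idmat_def)

lemma upper_prodL: "upper n (prodL n v xs)"
  by (induction xs) (auto simp: prodL_Nil prodL_Cons upper_idmat upper_RM upper_matmul)

lemma diag_matmul: assumes "upper n A" "upper n B" "a < n"
  shows "matmul n A B a a = A a a * B a a"
  unfolding matmul_def
proof (rule sum_single)
  fix b assume "b \<in> {..<n}" "b \<noteq> a"
  then show "A a b * B b a = 0" using assms unfolding upper_def by (cases "b < a") auto
qed (use assms in auto)

lemma diag_prodL: "a < n \<Longrightarrow> prodL n v xs a a = prod_list (map (\<lambda>k. v (Rv a a) - v (Rv k k)) xs)"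
proof (induction xs)
  case Nil then show ?case by (simp add: prodL_Nil idmat_def)
next
  case (Cons k xs)
  then show ?case
    by (simp add: prodL_Cons diag_matmul[OF upper_RM upper_prodL]) (simp add: RM_def rmat_def idmat_def)
qed

lemma block_prodL: "a \<le> x \<Longrightarrow> x < n \<Longrightarrow> c < b \<Longrightarrow> c < n \<Longrightarrow> prodL n v [a..<b] x c = 0"
proof (induction "b - a" arbitrary: a x)
  case 0
  then show ?case by (simp add: prodL_Nil idmat_def)
next
  case (Suc m)
  then have ab: "a < b" by simp
  have eq: "[a..<b] = a # [Suc a..<b]" using ab by (simp add: upt_conv_Cons)
  show ?case unfolding eq prodL_Cons matmul_def
  proof (rule sum.neutral, intro ballI)
    fix d assume d: "d \<in> {..<n}"
    show "RM v a x d * prodL n v [Suc a..<b] d c = 0"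
    proof (cases "d < x")
      case True then show ?thesis using upper_RM[of n v a] d Suc.prems unfolding upper_def by auto
    next
      case False
      show ?thesis
      proof (cases "Suc a \<le> d")
        case True
        then have "prodL n v [Suc a..<b] d c = 0" using Suc d by auto
        then show ?thesis by simp
      next
        case False
        then have "d = a" "x = a" using \<open>\<not> d < x\<close> Suc.prems by auto
        then show ?thesis by (simp add: RM_def rmat_def idmat_def)
      qed
    qed
  qed
qed

lemma filter_split: "io < n \<Longrightarrow> filter (\<lambda>k. k \<noteq> io) [0..<n] = [0..<io] @ [Suc io..<n]"
proof -
  assume "io < n"
  then have "[0..<n] = [0..<io] @ [io..<n]"
    using upt_add_eq_append[of 0 io "n - io"] by simp
  also have "[io..<n] = io # [Suc io..<n]" using \<open>io<n\<close> by (simp add: upt_conv_Cons)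
  finally have "[0..<n] = [0..<io] @ io # [Suc io..<n]" .
  then show ?thesis by (simp add: filter_True)
qed

lemma P_factor: assumes "io < n" "a < n" "b < n"
  shows "Pmat n io v a b = prodL n v [0..<io] a io * prodL n v [Suc io..<n] io b"
proof -
  have "Pmat n io v a b = matmul n (prodL n v [0..<io]) (prodL n v [Suc io..<n]) a b"
    using prodL_append[of n v "[0..<io]" "[Suc io..<n]"] assms
    by (simp add: Pmat_prodL filter_split meq_def)
  also have "\<dots> = prodL n v [0..<io] a io * prodL n v [Suc io..<n] io b"
    unfolding matmul_def
  proof (rule sum_single)
    fix d assume d: "d \<in> {..<n}" "d \<noteq> io"
    show "prodL n v [0..<io] a d * prodL n v [Suc io..<n] d b = 0"
    proof (cases "d < io")
      case True then show ?thesis using block_prodL[of 0 a n d io v] assms by simp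
    next
      case False then show ?thesis using block_prodL[of "Suc io" d n b n v] assms d by simp
    qed
  qed (use assms in auto)
  finally show ?thesis .
qed

lemma P_rank1: assumes "io < n" "a < n" "b < n"
  shows "Pmat n io v a b * Pmat n io v io io = Pmat n io v a io * Pmat n io v io b"
  using assms by (simp add: P_factor)

lemma P_col: assumes "io < n" "a < n" "io < a" shows "Pmat n io v a io = 0"
  using assms upper_prodL[of n v "[0..<io]"] by (simp add: P_factor upper_def)

lemma P_row: assumes "io < n" "b < n" "b < io" shows "Pmat n io v io b = 0"
  using assms upper_prodL[of n v "[Suc io..<n]"] by (simp add: P_factor upper_def)

lemma P_trace: assumes "io < n" shows "mtrace n (Pmat n io v) = Pmat n io v io io"
  unfolding mtrace_def
proof (rule sum_single)
  fix a assume a: "a \<in> {..<n}" "a \<noteq> io"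
  show "Pmat n io v a a = 0"
  proof (cases "a < io")
    case True then show ?thesis using assms a upper_prodL[of n v "[Suc io..<n]"] by (simp add: P_factor upper_def)
  next
    case False then show ?thesis using assms a upper_prodL[of n v "[0..<io]"] by (simp add: P_factor upper_def)
  qed
qed (use assms in auto)

lemma P_diag: assumes "io < n"
  shows "Pmat n io v io io = prod_list (map (\<lambda>k. v (Rv io io) - v (Rv k k)) (filter (\<lambda>k. k \<noteq> io) [0..<n]))"
  using assms by (simp add: Pmat_prodL diag_prodL)

lemma mm_RM_left: "x < n \<Longrightarrow> matmul n (RM v a) B x c = matmul n (rmat v) B x c - v (Rv a a) * B x c"
proof -
  assume x: "x < n"
  have "matmul n (RM v a) B x c = matmul n (rmat v) B x c - v (Rv a a) * matmul n idmat B x c"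
    by (simp add: matmul_def RM_def left_diff_distrib sum_subtractf sum_distrib_left mult.assoc)
  then show ?thesis using x by (simp add: matmul_idl)
qed

lemma mm_RM_right: "c < n \<Longrightarrow> matmul n A (RM v a) x c = matmul n A (rmat v) x c - v (Rv a a) * A x c"
proof -
  assume c: "c < n"
  have "matmul n A (RM v a) x c = matmul n A (rmat v) x c - v (Rv a a) * matmul n A idmat x c"
    by (simp add: matmul_def RM_def right_diff_distrib sum_subtractf sum_distrib_left mult.assoc mult.left_commute)
  then show ?thesis using c by (simp add: matmul_idr)
qed

lemma RM_commute: "meq n (matmul n (RM v a) (RM v b)) (matmul n (RM v b) (RM v a))"
  unfolding meq_def
proof (intro allI impI)
  fix x c assume "x < n" "c < n"
  then show "matmul n (RM v a) (RM v b) x c = matmul n (RM v b) (RM v a) x c"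
    by (simp add: mm_RM_left mm_RM_right) (simp add: RM_def algebra_simps)
qed

lemma commute_prodL:
  assumes "\<forall>m\<in>set xs. meq n (matmul n A (RM v m)) (matmul n (RM v m) A)"
  shows "meq n (matmul n A (prodL n v xs)) (matmul n (prodL n v xs) A)"
  using assms
proof (induction xs)
  case Nil then show ?case by (simp add: prodL_Nil meq_def matmul_idl matmul_idr)
next
  case (Cons x xs)
  have "meq n (matmul n A (prodL n v (x # xs))) (matmul n (matmul n A (RM v x)) (prodL n v xs))"
    by (simp add: prodL_Cons matmul_assoc meq_refl)
  also have "meq n \<dots> (matmul n (matmul n (RM v x) A) (prodL n v xs))"
    using Cons.prems by (intro matmul_cong[OF _ meq_refl]) simp
  also have "matmul n (matmul n (RM v x) A) (prodL n v xs) = matmul n (RM v x) (matmul n A (prodL n v xs))"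
    by (simp add: matmul_assoc)
  also have "meq n \<dots> (matmul n (RM v x) (matmul n (prodL n v xs) A))"
    using Cons by (intro matmul_cong[OF meq_refl]) simp
  also have "matmul n (RM v x) (matmul n (prodL n v xs) A) = matmul n (prodL n v (x # xs)) A"
    by (simp add: prodL_Cons matmul_assoc)
  finally show ?case by (simp add: meq_refl)
qed


lemma RP_zero: assumes "io < n"
  shows "meq n (matmul n (RM v io) (Pmat n io v)) (\<lambda>_ _. 0)"
proof -
  have "meq n (matmul n (RM v io) (Pmat n io v))
          (matmul n (RM v io) (matmul n (prodL n v [0..<io]) (prodL n v [Suc io..<n])))"
    using prodL_append[of n v "[0..<io]" "[Suc io..<n]"] assms
    by (intro matmul_cong[OF meq_refl]) (simp add: Pmat_prodL filter_split)
  also have "\<dots> = matmul n (matmul n (RM v io) (prodL n v [0..<io])) (prodL n v [Suc io..<n])"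
    by (simp add: matmul_assoc)
  also have "meq n \<dots> (matmul n (matmul n (prodL n v [0..<io]) (RM v io)) (prodL n v [Suc io..<n]))"
    by (intro matmul_cong[OF _ meq_refl] commute_prodL) (simp add: RM_commute)
  also have "\<dots> = matmul n (prodL n v [0..<io]) (prodL n v (io # [Suc io..<n]))"
    by (simp add: matmul_assoc prodL_Cons)
  also have "io # [Suc io..<n] = [io..<n]" using assms by (simp add: upt_conv_Cons)
  also have "meq n (matmul n (prodL n v [0..<io]) (prodL n v [io..<n])) (prodL n v ([0..<io] @ [io..<n]))"
    by (rule meq_sym[OF prodL_append])
  also have "[0..<io] @ [io..<n] = [0..<n]"
    using upt_add_eq_append[of 0 io "n - io"] assms by simp
  also have "meq n (prodL n v [0..<n]) (\<lambda>_ _. 0)"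
    unfolding meq_def using block_prodL[of 0 _ n _ n v] by simp
  finally show ?thesis .
qed

lemma PR_zero: assumes "io < n"
  shows "meq n (matmul n (Pmat n io v) (RM v io)) (\<lambda>_ _. 0)"
proof -
  have "meq n (matmul n (RM v io) (Pmat n io v)) (matmul n (Pmat n io v) (RM v io))"
    unfolding Pmat_prodL by (intro commute_prodL) (simp add: RM_commute)
  then show ?thesis using RP_zero[OF assms] by (rule meq_trans[OF meq_sym])
qed

lemma P_right_eig: assumes "k < n" "b < n"
  shows "matmul n (rmat v) (Pmat n k v) b k = v (Rv k k) * Pmat n k v b k"
  using RP_zero[OF assms(1), of v] assms by (simp add: meq_def mm_RM_left)

lemma P_left_eig: assumes "t < n" "c < n"
  shows "matmul n (Pmat n t v) (rmat v) t c = v (Rv t t) * Pmat n t v t c"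
  using PR_zero[OF assms(1), of v] assms by (simp add: meq_def mm_RM_right)

lemma P_orth: assumes "t < n" "k < n" "v (Rv t t) \<noteq> v (Rv k k)"
  shows "(\<Sum>b<n. Pmat n t v t b * Pmat n k v b k) = 0"
proof -
  let ?S = "\<Sum>b<n. Pmat n t v t b * Pmat n k v b k"
  have "matmul n (Pmat n t v) (matmul n (rmat v) (Pmat n k v)) t k = v (Rv k k) * ?S"
    unfolding matmul_def[of n "Pmat n t v" "matmul n (rmat v) (Pmat n k v)"]
    using P_right_eig[OF assms(2)] by (simp add: sum_distrib_left mult.left_commute)
  moreover have "matmul n (matmul n (Pmat n t v) (rmat v)) (Pmat n k v) t k = v (Rv t t) * ?S"
    unfolding matmul_def[of n "matmul n (Pmat n t v) (rmat v)" "Pmat n k v"]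
    using P_left_eig[OF assms(1)] by (simp add: sum_distrib_left mult.assoc)
  ultimately have "v (Rv k k) * ?S = v (Rv t t) * ?S"
    by (simp only: matmul_assoc)
  then show ?thesis using assms(3) by auto
qed



lemma polyfun_sum: "finite A \<Longrightarrow> (\<And>x. x \<in> A \<Longrightarrow> g x \<in> polyfun) \<Longrightarrow> (\<lambda>v. \<Sum>x\<in>A. g x v) \<in> polyfun"
proof (induction A rule: finite_induct)
  case empty then show ?case using pconst[of 0] by simp
next
  case (insert a A)
  then show ?case using padd[of "g a" "\<lambda>v. \<Sum>x\<in>A. g x v"] by simp
qed

lemma polyfun_prod: "finite A \<Longrightarrow> (\<And>x. x \<in> A \<Longrightarrow> g x \<in> polyfun) \<Longrightarrow> (\<lambda>v. \<Prod>x\<in>A. g x v) \<in> polyfun"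
proof (induction A rule: finite_induct)
  case empty then show ?case using pconst[of 1] by simp
next
  case (insert a A)
  then show ?case using pmult[of "g a" "\<lambda>v. \<Prod>x\<in>A. g x v"] by simp
qed

lemma polyfun_power: "p \<in> polyfun \<Longrightarrow> (\<lambda>v. p v ^ k) \<in> polyfun"
proof (induction k)
  case 0 then show ?case using pconst[of 1] by simp
next
  case (Suc k) then show ?case using pmult[of p "\<lambda>v. p v ^ k"] by simp
qed

lemma polyfun_rmat: "(\<lambda>v. rmat v a c) \<in> polyfun"
  by (cases "a \<le> c") (simp_all add: rmat_def pvar pconst[of 0, simplified])

lemma polyfun_const: "(\<lambda>v. c) \<in> polyfun" by (rule pconst)
lemma polyfun_var: "(\<lambda>v. v x) \<in> polyfun" by (rule pvar)

lemma polyfun_prodL: "(\<lambda>v. prodL n v xs a c) \<in> polyfun"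
proof (induction xs arbitrary: a c)
  case Nil then show ?case by (simp add: prodL_Nil pconst)
next
  case (Cons k xs)
  have "(\<lambda>v. \<Sum>b<n. RM v k a b * prodL n v xs b c) \<in> polyfun"
  proof (rule polyfun_sum)
    fix b
    have "(\<lambda>v. RM v k a b) \<in> polyfun" unfolding RM_def
      by (intro padd[of _ "\<lambda>v. - (v (Rv k k) * idmat a b)", simplified] pmult[of "\<lambda>v. - 1" "\<lambda>v. v (Rv k k) * idmat a b", simplified]
          pmult polyfun_rmat polyfun_var polyfun_const)
    then show "(\<lambda>v. RM v k a b * prodL n v xs b c) \<in> polyfun" using Cons pmult by blast
  qed simp
  then show ?case by (simp add: prodL_Cons matmul_def)
qed

lemma polyfun_Pmat: "(\<lambda>v. Pmat n io v a c) \<in> polyfun"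
  by (simp add: Pmat_prodL polyfun_prodL)

lemma polyfun_disc: "disc n \<in> polyfun"
proof -
  have "(\<lambda>v. \<Prod>x\<in>{(a,b). a < b \<and> b < n}. (\<lambda>x v. v (Rv (fst x) (fst x)) - v (Rv (snd x) (snd x))) x v) \<in> polyfun"
  proof (rule polyfun_prod)
    show "finite {(a,b). a < b \<and> b < n}"
      by (rule finite_subset[of _ "{..<n} \<times> {..<n}"]) auto
  next
    fix x
    show "(\<lambda>v. v (Rv (fst x) (fst x)) - v (Rv (snd x) (snd x))) \<in> polyfun"
      using padd[OF pvar pmult[OF pconst[of "-1"] pvar]] by simp
  qed
  then show ?thesis unfolding disc_def by (simp add: case_prod_beta' fun_eq_iff)
qed

lemma finite_pairs: "finite {(a,b). a < b \<and> b < (n::nat)}"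
  by (rule finite_subset[of _ "{..<n} \<times> {..<n}"]) auto

lemma disc_nz: "v \<in> Xrss n \<Longrightarrow> disc n v \<noteq> 0"
  unfolding disc_def Xrss_def using finite_pairs[of n] by (auto simp: prod_zero_iff)

lemma reg_cong: "regular_fun n f \<Longrightarrow> (\<And>v. v \<in> Xrss n \<Longrightarrow> f v = g v) \<Longrightarrow> regular_fun n g"
  unfolding regular_fun_def by metis

lemma reg_poly: "p \<in> polyfun \<Longrightarrow> regular_fun n p"
  unfolding regular_fun_def by (rule bexI[of _ p]) (auto intro: exI[of _ 0])

lemma reg_const: "regular_fun n (\<lambda>v. c)" by (rule reg_poly[OF pconst])
lemma reg_var: "regular_fun n (\<lambda>v. v x)" by (rule reg_poly[OF pvar])

lemma reg_add: assumes "regular_fun n f" "regular_fun n g" shows "regular_fun n (\<lambda>v. f v + g v)"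
proof -
  obtain p m where p: "p \<in> polyfun" "\<forall>v\<in>Xrss n. f v = p v / disc n v ^ m" using assms(1) unfolding regular_fun_def by blast
  obtain q k where q: "q \<in> polyfun" "\<forall>v\<in>Xrss n. g v = q v / disc n v ^ k" using assms(2) unfolding regular_fun_def by blast
  have "(\<lambda>v. p v * disc n v ^ k + q v * disc n v ^ m) \<in> polyfun"
    by (intro padd pmult p q polyfun_power polyfun_disc)
  moreover have "\<forall>v\<in>Xrss n. f v + g v = (p v * disc n v ^ k + q v * disc n v ^ m) / disc n v ^ (m + k)"
  proof
    fix v assume v: "v \<in> Xrss n"
    have d: "disc n v \<noteq> 0" using disc_nz[OF v] .
    have fg: "f v = p v / disc n v ^ m" "g v = q v / disc n v ^ k" using v p q by auto
    show "f v + g v = (p v * disc n v ^ k + q v * disc n v ^ m) / disc n v ^ (m + k)"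
      unfolding fg using d by (simp add: field_simps power_add)
  qed
  ultimately show ?thesis unfolding regular_fun_def
    by (intro bexI[of _ "\<lambda>v. p v * disc n v ^ k + q v * disc n v ^ m"] exI[of _ "m+k"]) auto
qed

lemma reg_mult: assumes "regular_fun n f" "regular_fun n g" shows "regular_fun n (\<lambda>v. f v * g v)"
proof -
  obtain p m where p: "p \<in> polyfun" "\<forall>v\<in>Xrss n. f v = p v / disc n v ^ m" using assms(1) unfolding regular_fun_def by blast
  obtain q k where q: "q \<in> polyfun" "\<forall>v\<in>Xrss n. g v = q v / disc n v ^ k" using assms(2) unfolding regular_fun_def by blast
  have "(\<lambda>v. p v * q v) \<in> polyfun" by (intro pmult p q)
  moreover have "\<forall>v\<in>Xrss n. f v * g v = (p v * q v) / disc n v ^ (m + k)"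
  proof
    fix v assume v: "v \<in> Xrss n"
    have d: "disc n v \<noteq> 0" using disc_nz[OF v] .
    have fg: "f v = p v / disc n v ^ m" "g v = q v / disc n v ^ k" using v p q by auto
    show "f v * g v = (p v * q v) / disc n v ^ (m + k)"
      unfolding fg using d by (simp add: field_simps power_add)
  qed
  ultimately show ?thesis unfolding regular_fun_def
    by (intro bexI[of _ "\<lambda>v. p v * q v"] exI[of _ "m+k"]) auto
qed

lemma reg_uminus: "regular_fun n f \<Longrightarrow> regular_fun n (\<lambda>v. - f v)"
  using reg_mult[OF reg_const[of n "-1"]] by simp

lemma reg_diff: "regular_fun n f \<Longrightarrow> regular_fun n g \<Longrightarrow> regular_fun n (\<lambda>v. f v - g v)"
  using reg_add[OF _ reg_uminus] by simp

lemma reg_divdisc: assumes "regular_fun n f" shows "regular_fun n (\<lambda>v. f v / disc n v ^ k)"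
proof -
  obtain p m where p: "p \<in> polyfun" "\<forall>v\<in>Xrss n. f v = p v / disc n v ^ m" using assms(1) unfolding regular_fun_def by blast
  have "\<forall>v\<in>Xrss n. f v / disc n v ^ k = p v / disc n v ^ (m + k)"
  proof
    fix v assume v: "v \<in> Xrss n"
    have d: "disc n v \<noteq> 0" using disc_nz[OF v] .
    have "f v = p v / disc n v ^ m" using v p by auto
    then show "f v / disc n v ^ k = p v / disc n v ^ (m + k)"
      using d by (simp add: field_simps power_add)
  qed
  then show ?thesis using p(1) unfolding regular_fun_def by blast
qed

lemma reg_sum: "finite A \<Longrightarrow> (\<And>x. x \<in> A \<Longrightarrow> regular_fun n (g x)) \<Longrightarrow> regular_fun n (\<lambda>v. \<Sum>x\<in>A. g x v)"
proof (induction A rule: finite_induct)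
  case empty then show ?case using reg_const[of n 0] by simp
next
  case (insert a A)
  then show ?case using reg_add[of n "g a" "\<lambda>v. \<Sum>x\<in>A. g x v"] by simp
qed

lemma reg_inv_diff_lt: assumes "a < b" "b < n"
  shows "regular_fun n (\<lambda>v. 1 / (v (Rv a a) - v (Rv b b)))"
proof -
  let ?S = "{(a,b). a < b \<and> b < n}"
  let ?g = "\<lambda>v. \<Prod>x\<in>?S - {(a,b)}. v (Rv (fst x) (fst x)) - v (Rv (snd x) (snd x))"
  have fin: "finite (?S - {(a,b)})" using finite_pairs[of n] by simp
  have "?g \<in> polyfun"
    by (rule polyfun_prod[OF fin]) (use padd[OF pvar pmult[OF pconst[of "-1"] pvar]] in simp)
  then have r: "regular_fun n (\<lambda>v. ?g v / disc n v ^ 1)" by (intro reg_divdisc reg_poly)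
  have "disc n v = (v (Rv a a) - v (Rv b b)) * ?g v" for v
  proof -
    have "disc n v = (\<Prod>x\<in>?S. v (Rv (fst x) (fst x)) - v (Rv (snd x) (snd x)))"
      unfolding disc_def by (simp add: case_prod_beta')
    also have "\<dots> = (v (Rv a a) - v (Rv b b)) * ?g v"
      using assms finite_pairs[of n] by (subst prod.remove[of _ "(a,b)"]) auto
    finally show ?thesis .
  qed
  then have "\<forall>v\<in>Xrss n. ?g v / disc n v ^ 1 = 1 / (v (Rv a a) - v (Rv b b))"
  proof (intro ballI)
    fix v assume v: "v \<in> Xrss n"
    have e: "disc n v = (v (Rv a a) - v (Rv b b)) * ?g v" by fact
    have d: "disc n v \<noteq> 0" using disc_nz[OF v] .
    then have "?g v \<noteq> 0" using e by auto
    then show "?g v / disc n v ^ 1 = 1 / (v (Rv a a) - v (Rv b b))" unfolding power_one_right e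
      by simp
  qed
  then show ?thesis using reg_cong[OF r] by auto
qed

lemma reg_inv_diff: assumes "a < n" "b < n" "a \<noteq> b"
  shows "regular_fun n (\<lambda>v. 1 / (v (Rv a a) - v (Rv b b)))"
proof (cases "a < b")
  case True then show ?thesis using reg_inv_diff_lt assms by blast
next
  case False
  then have "b < a" using assms by simp
  then have "regular_fun n (\<lambda>v. (-1) * (1 / (v (Rv b b) - v (Rv a a))))"
    using reg_inv_diff_lt assms reg_mult[OF reg_const] by blast
  then show ?thesis by (rule reg_cong) (metis minus_diff_eq minus_divide_right mult_minus1)
qed

lemma reg_inv_prodlist: assumes "io < n" "set xs \<subseteq> {..<n} - {io}"
  shows "regular_fun n (\<lambda>v. 1 / prod_list (map (\<lambda>k. v (Rv io io) - v (Rv k k)) xs))"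
  using assms(2)
proof (induction xs)
  case Nil then show ?case using reg_const[of n 1] by simp
next
  case (Cons k xs)
  then have "regular_fun n (\<lambda>v. (1 / (v (Rv io io) - v (Rv k k))) * (1 / prod_list (map (\<lambda>k. v (Rv io io) - v (Rv k k)) xs)))"
    using assms(1) by (intro reg_mult reg_inv_diff) auto
  then show ?case by (rule reg_cong) simp
qed

lemma reg_invP: assumes "io < n" shows "regular_fun n (\<lambda>v. 1 / Pmat n io v io io)"
  unfolding P_diag[OF assms] by (rule reg_inv_prodlist[OF assms]) auto

lemma Lmat_eq: "io < n \<Longrightarrow> Lmat n io v a b = Pmat n io v a b / Pmat n io v io io"
  by (simp add: Lmat_def P_trace)

lemma reg_Lmat: assumes "io < n" shows "regular_fun n (\<lambda>v. Lmat n io v a b)"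
proof -
  have "regular_fun n (\<lambda>v. Pmat n io v a b * (1 / Pmat n io v io io))"
    by (intro reg_mult reg_invP assms reg_poly polyfun_Pmat)
  then show ?thesis by (rule reg_cong) (simp add: Lmat_eq[OF assms])
qed

lemma Pdiag_nz: assumes "io < n" "v \<in> Xrss n" shows "Pmat n io v io io \<noteq> 0"
  using assms unfolding P_diag[OF assms(1)] Xrss_def by (auto simp: prod_list_zero_iff)



definition shift :: "(point \<Rightarrow> complex) \<Rightarrow> (point \<Rightarrow> var \<Rightarrow> complex) \<Rightarrow> point \<Rightarrow> point" where
  "shift c Z v = (\<lambda>x. v x + c v * Z v x)"

definition okZ :: "nat \<Rightarrow> (point \<Rightarrow> var \<Rightarrow> complex) \<Rightarrow> bool" where
  "okZ n Z \<longleftrightarrow> (\<forall>v\<in>Xrss n. \<forall>x. Z v x \<noteq> 0 \<longrightarrow> (\<exists>b<n. x = Iv b \<or> x = Jv b))"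

lemma shift_Rv: "okZ n Z \<Longrightarrow> v \<in> Xrss n \<Longrightarrow> shift c Z v (Rv a b) = v (Rv a b)"
  unfolding okZ_def shift_def by (cases "Z v (Rv a b) = 0") auto

lemma shift_Xrss: assumes "okZ n Z" "v \<in> Xrss n" shows "shift c Z v \<in> Xrss n"
proof -
  have "shift c Z v x = 0" if "\<not> valid_var n x" for x
  proof -
    have "Z v x = 0" using assms that unfolding okZ_def by force
    moreover have "v x = 0" using assms(2) that unfolding Xrss_def by auto
    ultimately show ?thesis by (simp add: shift_def)
  qed
  moreover have "\<forall>a b. a < n \<longrightarrow> b < n \<longrightarrow> a \<noteq> b \<longrightarrow> v (Rv a a) \<noteq> v (Rv b b)"
    using assms(2) unfolding Xrss_def by auto
  ultimately show ?thesis unfolding Xrss_def using shift_Rv[OF assms] by auto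
qed

lemma disc_shift: "okZ n Z \<Longrightarrow> v \<in> Xrss n \<Longrightarrow> disc n (shift c Z v) = disc n v"
  unfolding disc_def by (simp add: shift_Rv)

lemma shift_poly:
  assumes ok: "okZ n Z" and c: "regular_fun n c" and Z: "\<And>x. regular_fun n (\<lambda>v. Z v x)"
    and p: "p \<in> polyfun"
  shows "regular_fun n (\<lambda>v. p (shift c Z v)) \<and>
         (\<exists>q. regular_fun n q \<and> (\<forall>v\<in>Xrss n. p (shift c Z v) = p v + c v * q v))"
  using p
proof (induction rule: polyfun.induct)
  case (pconst a)
  then show ?case using reg_const by (auto intro!: exI[of _ "\<lambda>v. 0"])
next
  case (pvar x)
  have "regular_fun n (\<lambda>v. v x + c v * Z v x)" by (intro reg_add reg_mult reg_var c Z)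
  then show ?case using Z by (auto simp: shift_def intro!: exI[of _ "\<lambda>v. Z v x"])
next
  case (padd p1 p2)
  then obtain q1 q2 where q: "regular_fun n q1" "\<forall>v\<in>Xrss n. p1 (shift c Z v) = p1 v + c v * q1 v"
      "regular_fun n q2" "\<forall>v\<in>Xrss n. p2 (shift c Z v) = p2 v + c v * q2 v" by blast
  have "regular_fun n (\<lambda>v. q1 v + q2 v)" using q by (intro reg_add)
  moreover have "\<forall>v\<in>Xrss n. p1 (shift c Z v) + p2 (shift c Z v) = (p1 v + p2 v) + c v * (q1 v + q2 v)"
    using q by (simp add: algebra_simps)
  ultimately show ?case using padd by (auto intro!: reg_add)
next
  case (pmult p1 p2)
  then obtain q1 q2 where q: "regular_fun n q1" "\<forall>v\<in>Xrss n. p1 (shift c Z v) = p1 v + c v * q1 v"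
      "regular_fun n q2" "\<forall>v\<in>Xrss n. p2 (shift c Z v) = p2 v + c v * q2 v" by blast
  have r2: "regular_fun n (\<lambda>v. p2 (shift c Z v))" using pmult by blast
  have r1: "regular_fun n p1" using reg_poly pmult.hyps(1) by blast
  have "regular_fun n (\<lambda>v. q1 v * p2 (shift c Z v) + p1 v * q2 v)"
    by (intro reg_add reg_mult q(1) q(3) r1 r2)
  moreover have "\<forall>v\<in>Xrss n. p1 (shift c Z v) * p2 (shift c Z v) =
      p1 v * p2 v + c v * (q1 v * p2 (shift c Z v) + p1 v * q2 v)"
  proof
    fix v assume v: "v \<in> Xrss n"
    have "p1 (shift c Z v) * p2 (shift c Z v) = (p1 v + c v * q1 v) * p2 (shift c Z v)" using q v by simp
    also have "\<dots> = p1 v * p2 (shift c Z v) + c v * q1 v * p2 (shift c Z v)" by (simp add: algebra_simps)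
    also have "p1 v * p2 (shift c Z v) = p1 v * (p2 v + c v * q2 v)" using q v by simp
    finally show "p1 (shift c Z v) * p2 (shift c Z v) =
      p1 v * p2 v + c v * (q1 v * p2 (shift c Z v) + p1 v * q2 v)" by (simp add: algebra_simps)
  qed
  ultimately show ?case using pmult by (auto intro!: reg_mult)
qed

lemma shift_reg:
  assumes ok: "okZ n Z" and c: "regular_fun n c" and Z: "\<And>x. regular_fun n (\<lambda>v. Z v x)"
    and f: "regular_fun n f"
  shows "regular_fun n (\<lambda>v. f (shift c Z v)) \<and>
         (\<exists>q. regular_fun n q \<and> (\<forall>v\<in>Xrss n. f (shift c Z v) = f v + c v * q v))"
proof -
  obtain p m where p: "p \<in> polyfun" "\<forall>v\<in>Xrss n. f v = p v / disc n v ^ m" using f unfolding regular_fun_def by blast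
  obtain q where q: "regular_fun n q" "\<forall>v\<in>Xrss n. p (shift c Z v) = p v + c v * q v"
    and rp: "regular_fun n (\<lambda>v. p (shift c Z v))"
    using shift_poly[OF ok c Z p(1)] by blast
  have e1: "f (shift c Z v) = p (shift c Z v) / disc n v ^ m" if "v \<in> Xrss n" for v
    using p(2) shift_Xrss[OF ok that] disc_shift[OF ok that] by simp
  have "regular_fun n (\<lambda>v. f (shift c Z v))"
    using reg_divdisc[OF rp, of m] by (rule reg_cong) (simp add: e1)
  moreover have "regular_fun n (\<lambda>v. q v / disc n v ^ m)" by (rule reg_divdisc[OF q(1)])
  moreover have "\<forall>v\<in>Xrss n. f (shift c Z v) = f v + c v * (q v / disc n v ^ m)"
    using e1 p(2) q(2) by (simp add: add_divide_distrib)
  ultimately show ?thesis by blast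
qed

lemma shift_comp:
  assumes ok: "okZ n Z" and c: "regular_fun n c" and Z: "\<And>x. regular_fun n (\<lambda>v. Z v x)"
    and f: "regular_fun n f"
  shows "regular_fun n (\<lambda>v. f (shift c Z v))"
  using shift_reg[OF assms] by blast



definition uu :: "nat \<Rightarrow> nat \<Rightarrow> point \<Rightarrow> complex" where
  "uu n t v = (\<Sum>a<n. v (Jv a) * Lmat n t v a t)"
definition ww :: "nat \<Rightarrow> nat \<Rightarrow> point \<Rightarrow> complex" where
  "ww n t v = (\<Sum>b<n. Lmat n t v t b * v (Iv b))"

lemma L_prod: assumes "t < n" "a < n" "c < n"
  shows "Lmat n t v a c = Lmat n t v a t * Lmat n t v t c"
proof (cases "Pmat n t v t t = 0")
  case True then show ?thesis using assms by (simp add: Lmat_eq)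
next
  case False
  have "Pmat n t v a c * Pmat n t v t t = Pmat n t v a t * Pmat n t v t c" by (rule P_rank1[OF assms])
  then show ?thesis using False assms by (simp add: Lmat_eq field_simps power2_eq_square)
qed

lemma F_eq: assumes "t < n" shows "Ffun n t v = uu n t v * ww n t v"
proof -
  have "Ffun n t v = (\<Sum>a<n. \<Sum>c<n. (v (Jv a) * Lmat n t v a t) * (Lmat n t v t c * v (Iv c)))"
    unfolding Ffun_def using L_prod[OF assms] by (intro sum.cong refl) (simp add: mult.assoc mult.left_commute)
  also have "\<dots> = uu n t v * ww n t v"
    unfolding uu_def ww_def by (simp add: sum_product)
  finally show ?thesis .
qed

lemma reg_uu: "t < n \<Longrightarrow> regular_fun n (uu n t)"
  unfolding uu_def by (intro reg_sum reg_mult reg_var reg_Lmat) auto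

lemma reg_ww: "t < n \<Longrightarrow> regular_fun n (ww n t)"
  unfolding ww_def by (intro reg_sum reg_mult reg_var reg_Lmat) auto

lemma reg_F: assumes "t < n" shows "regular_fun n (Ffun n t)"
  using reg_mult[OF reg_uu[OF assms] reg_ww[OF assms]] by (rule reg_cong) (simp add: F_eq[OF assms])

lemma L_diag: "t < n \<Longrightarrow> v \<in> Xrss n \<Longrightarrow> Lmat n t v t t = 1"
  using Pdiag_nz by (simp add: Lmat_eq)

lemma L_col: "t < n \<Longrightarrow> a < n \<Longrightarrow> t < a \<Longrightarrow> Lmat n t v a t = 0"
  by (simp add: Lmat_eq P_col)

lemma L_row: "t < n \<Longrightarrow> b < n \<Longrightarrow> b < t \<Longrightarrow> Lmat n t v t b = 0"
  by (simp add: Lmat_eq P_row)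

lemma L_orth: assumes "t < n" "k < n" "t \<noteq> k" "v \<in> Xrss n"
  shows "(\<Sum>b<n. Lmat n t v t b * Lmat n k v b k) = 0"
proof -
  have ne: "v (Rv t t) \<noteq> v (Rv k k)" using assms unfolding Xrss_def by auto
  have "(\<Sum>b<n. Lmat n t v t b * Lmat n k v b k) =
        (\<Sum>b<n. Pmat n t v t b * Pmat n k v b k) / (Pmat n t v t t * Pmat n k v k k)"
    using assms by (simp add: Lmat_eq sum_divide_distrib)
  then show ?thesis using P_orth[OF assms(1,2) ne] by simp
qed

lemma L_self: assumes "k < n" "v \<in> Xrss n"
  shows "(\<Sum>b<n. Lmat n k v k b * Lmat n k v b k) = 1"
proof -
  have "(\<Sum>b<n. Lmat n k v k b * Lmat n k v b k) = Lmat n k v k k * Lmat n k v k k"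
  proof (rule sum_single)
    fix b assume "b \<in> {..<n}" "b \<noteq> k"
    then show "Lmat n k v k b * Lmat n k v b k = 0" using assms L_row L_col
      by (cases "b < k") auto
  qed (use assms in auto)
  then show ?thesis using L_diag[OF assms] by simp
qed

lemma Lmat_cong: assumes h: "\<And>a b. v (Rv a b) = v' (Rv a b)" shows "Lmat n t v = Lmat n t v'"
proof -
  have r: "rmat v = rmat v'" using h by (simp add: rmat_def fun_eq_iff)
  have "Pmat n t v = Pmat n t v'" unfolding Pmat_def r h ..
  then show ?thesis by (simp add: Lmat_def)
qed

lemma Lmat_shift: "okZ n Z \<Longrightarrow> v \<in> Xrss n \<Longrightarrow> Lmat n t (shift c Z v) = Lmat n t v"
  by (rule Lmat_cong) (simp add: shift_Rv)

lemma uu_shift: assumes "okZ n Z" "v \<in> Xrss n"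
  shows "uu n t (shift c Z v) = uu n t v + c v * (\<Sum>a<n. Z v (Jv a) * Lmat n t v a t)"
  unfolding uu_def Lmat_shift[OF assms]
  by (simp add: shift_def algebra_simps sum.distrib sum_distrib_left)

lemma ww_shift: assumes "okZ n Z" "v \<in> Xrss n"
  shows "ww n t (shift c Z v) = ww n t v + c v * (\<Sum>b<n. Lmat n t v t b * Z v (Iv b))"
  unfolding ww_def Lmat_shift[OF assms]
  by (simp add: shift_def algebra_simps sum.distrib sum_distrib_left)



lemma poly_cont: "p \<in> polyfun \<Longrightarrow> continuous_on UNIV (\<lambda>s::complex. p (\<lambda>x. v x + s * D x))"
  by (induction rule: polyfun.induct) (auto intro!: continuous_intros)

lemma zero_lim:
  fixes f :: "complex \<Rightarrow> complex"
  assumes "continuous_on UNIV f" "\<And>s. s \<noteq> \<alpha> \<Longrightarrow> s \<noteq> \<beta> \<Longrightarrow> f s = 0"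
  shows "f 0 = 0"
proof -
  have "isCont f 0" using assms(1) continuous_on_eq_continuous_at open_UNIV by blast
  then have l1: "(f \<longlongrightarrow> f 0) (at 0)" by (simp add: isCont_def)
  have ev: "eventually (\<lambda>s. 0 = f s) (at 0)"
    using eventually_conj[OF eventually_neq_at_within[where z=0 and A=UNIV and x=\<alpha>] eventually_neq_at_within[where z=0 and A=UNIV and x=\<beta>]]
    by (rule eventually_mono) (use assms(2) in auto)
  have l2: "(f \<longlongrightarrow> 0) (at 0)"
    by (rule Lim_transform_eventually[OF tendsto_const ev])
  show ?thesis using tendsto_unique[OF at_neq_bot l1 l2] .
qed

definition Zs :: "nat \<Rightarrow> point \<Rightarrow> var \<Rightarrow> complex" where
  "Zs k = (\<lambda>v x. if x = Jv k then 1 else 0)"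
definition Zt :: "nat \<Rightarrow> nat \<Rightarrow> point \<Rightarrow> var \<Rightarrow> complex" where
  "Zt n k = (\<lambda>v x. case x of Iv b \<Rightarrow> if b < n then Lmat n k v b k else 0 | _ \<Rightarrow> 0)"

lemma okZ_Zs: "k < n \<Longrightarrow> okZ n (Zs k)"
  unfolding okZ_def Zs_def by auto

lemma okZ_Zt: "okZ n (Zt n k)"
  unfolding okZ_def Zt_def by (auto split: var.splits if_splits)

lemma reg_Zs: "regular_fun n (\<lambda>v. Zs k v x)"
  unfolding Zs_def by (rule reg_const)

lemma reg_if: "regular_fun n f \<Longrightarrow> regular_fun n g \<Longrightarrow> regular_fun n (\<lambda>v. if P then f v else g v)"
  by (cases P) auto

lemma reg_Zt: "k < n \<Longrightarrow> regular_fun n (\<lambda>v. Zt n k v x)"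
  unfolding Zt_def by (cases x) (auto intro!: reg_const reg_Lmat reg_if)



lemma sum_Zs_J: "k < n \<Longrightarrow> (\<Sum>a<n. Zs k v (Jv a) * f a) = f k"
  unfolding Zs_def by (subst sum_single[of _ k]) auto

lemma sum_Zs_I: "(\<Sum>b<n. f b * Zs k v (Iv b)) = 0"
  unfolding Zs_def by simp

lemma sum_Zt_J: "(\<Sum>a<n. Zt n k v (Jv a) * f a) = 0"
  unfolding Zt_def by simp

lemma sum_Zt_I: "(\<Sum>b<n. f b * Zt n k v (Iv b)) = (\<Sum>b<n. f b * Lmat n k v b k)"
  unfolding Zt_def by (intro sum.cong) auto

definition sig :: "nat \<Rightarrow> nat \<Rightarrow> point \<Rightarrow> point" where
  "sig n k = shift (\<lambda>v. - uu n k v) (Zs k)"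
definition tau :: "nat \<Rightarrow> nat \<Rightarrow> point \<Rightarrow> point" where
  "tau n k = shift (\<lambda>v. - ww n k v) (Zt n k)"

lemma sig_X: "k < n \<Longrightarrow> v \<in> Xrss n \<Longrightarrow> sig n k v \<in> Xrss n"
  unfolding sig_def by (rule shift_Xrss[OF okZ_Zs])
lemma tau_X: "v \<in> Xrss n \<Longrightarrow> tau n k v \<in> Xrss n"
  unfolding tau_def by (rule shift_Xrss[OF okZ_Zt])

lemma F_sig: assumes "t < k" "k < n" "v \<in> Xrss n" shows "Ffun n t (sig n k v) = Ffun n t v"
proof -
  have "uu n t (sig n k v) = uu n t v"
    unfolding sig_def uu_shift[OF okZ_Zs[OF assms(2)] assms(3)] sum_Zs_J[OF assms(2)]
    using L_col[of t n k v] assms by simp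
  moreover have "ww n t (sig n k v) = ww n t v"
    unfolding sig_def ww_shift[OF okZ_Zs[OF assms(2)] assms(3)] sum_Zs_I by simp
  ultimately show ?thesis using assms by (simp add: F_eq)
qed

lemma F_tau: assumes "t < k" "k < n" "v \<in> Xrss n" shows "Ffun n t (tau n k v) = Ffun n t v"
proof -
  have "uu n t (tau n k v) = uu n t v"
    unfolding tau_def uu_shift[OF okZ_Zt assms(3)] sum_Zt_J by simp
  moreover have "ww n t (tau n k v) = ww n t v"
    unfolding tau_def ww_shift[OF okZ_Zt assms(3)] sum_Zt_I
    using L_orth[of t n k v] assms by simp
  ultimately show ?thesis using assms by (simp add: F_eq)
qed

lemma Fk_sig: assumes "k < n" "v \<in> Xrss n" shows "Ffun n k (sig n k v) = 0"
proof -
  have "uu n k (sig n k v) = 0"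
    unfolding sig_def uu_shift[OF okZ_Zs[OF assms(1)] assms(2)] sum_Zs_J[OF assms(1)]
    using L_diag[OF assms] by simp
  then show ?thesis using assms by (simp add: F_eq)
qed

lemma Fk_tau: assumes "k < n" "v \<in> Xrss n" shows "Ffun n k (tau n k v) = 0"
proof -
  have "ww n k (tau n k v) = 0"
    unfolding tau_def ww_shift[OF okZ_Zt assms(2)] sum_Zt_I
    using L_self[OF assms] by simp
  then show ?thesis using assms by (simp add: F_eq)
qed

lemma uu_tau: assumes "v \<in> Xrss n" shows "uu n k (tau n k v) = uu n k v"
  unfolding tau_def uu_shift[OF okZ_Zt assms] sum_Zt_J by simp

lemma density:
  assumes k: "k < n" and e: "regular_fun n e"
    and h: "\<And>v. v \<in> Xrss n \<Longrightarrow> e v * uu n k v * ww n k v = 0"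
    and v: "v \<in> Xrss n"
  shows "e v = 0"
proof -
  obtain p m where p: "p \<in> polyfun" "\<forall>v\<in>Xrss n. e v = p v / disc n v ^ m"
    using e unfolding regular_fun_def by blast
  define D where "D = (\<lambda>x. Zs k v x + Zt n k v x)"
  define Zc where "Zc = (\<lambda>w::point. D)"
  have ok: "okZ n Zc" unfolding okZ_def Zc_def D_def Zs_def Zt_def using k
    by (auto split: var.splits if_splits)
  have gam: "shift (\<lambda>_. s) Zc v = (\<lambda>x. v x + s * D x)" for s
    by (simp add: shift_def Zc_def)
  have "p (\<lambda>x. v x + s * D x) = 0" if s1: "s \<noteq> - uu n k v" and s2: "s \<noteq> - ww n k v" for s
  proof -
    let ?g = "shift (\<lambda>_. s) Zc v"
    have gX: "?g \<in> Xrss n" by (rule shift_Xrss[OF ok v])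
    have "uu n k ?g = uu n k v + s"
      unfolding uu_shift[OF ok v] using L_diag[OF k v] k
      by (simp add: Zc_def D_def sum.distrib distrib_right sum_Zs_J sum_Zt_J)
    moreover have "ww n k ?g = ww n k v + s"
      unfolding ww_shift[OF ok v] using L_self[OF k v]
      by (simp add: Zc_def D_def sum.distrib distrib_left sum_Zs_I sum_Zt_I)
    ultimately have "e ?g * (uu n k v + s) * (ww n k v + s) = 0" using h[OF gX] by simp
    moreover have "uu n k v + s \<noteq> 0" "ww n k v + s \<noteq> 0" using s1 s2 by (auto simp: add_eq_0_iff)
    ultimately have "e ?g = 0" by simp
    then have "p ?g / disc n v ^ m = 0" using p(2) gX disc_shift[OF ok v] by simp
    then show ?thesis using disc_nz[OF v] gam by simp
  qed
  then have "(\<lambda>s. p (\<lambda>x. v x + s * D x)) 0 = 0"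
    by (intro zero_lim[OF poly_cont[OF p(1)]]) auto
  then have "p v = 0" by simp
  then show ?thesis using p(2) v by simp
qed



lemma step:
  assumes k: "k < n" and g: "regular_fun n g"
    and I: "in_ideal n (Ffun n) k (\<lambda>v. g v * Ffun n k v)"
  shows "in_ideal n (Ffun n) k g"
proof -
  obtain a where a: "\<forall>t<k. regular_fun n (a t)"
      "\<forall>v\<in>Xrss n. g v * Ffun n k v = (\<Sum>t<k. a t v * Ffun n t v)"
    using I unfolding in_ideal_def by blast
  have okS: "okZ n (Zs k)" by (rule okZ_Zs[OF k])
  have regS: "regular_fun n (\<lambda>v. - uu n k v)" by (intro reg_uminus reg_uu k)
  have regT: "regular_fun n (\<lambda>v. - ww n k v)" by (intro reg_uminus reg_ww k)
  have "\<forall>t. \<exists>q. t < k \<longrightarrow> regular_fun n q \<and> (\<forall>v\<in>Xrss n. a t (sig n k v) = a t v + (- uu n k v) * q v)"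
    using shift_reg[OF okS regS reg_Zs] a(1) unfolding sig_def by blast
  then obtain q1 where q1: "\<And>t. t < k \<Longrightarrow> regular_fun n (q1 t)"
      "\<And>t v. t < k \<Longrightarrow> v \<in> Xrss n \<Longrightarrow> a t (sig n k v) = a t v + (- uu n k v) * q1 t v"
    by metis
  have "\<forall>t. \<exists>q. t < k \<longrightarrow> regular_fun n q \<and> (\<forall>v\<in>Xrss n. q1 t (tau n k v) = q1 t v + (- ww n k v) * q v)"
    using shift_reg[OF okZ_Zt regT reg_Zt[OF k]] q1(1) unfolding tau_def by blast
  then obtain q2 where q2: "\<And>t. t < k \<Longrightarrow> regular_fun n (q2 t)"
      "\<And>t v. t < k \<Longrightarrow> v \<in> Xrss n \<Longrightarrow> q1 t (tau n k v) = q1 t v + (- ww n k v) * q2 t v"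
    by metis
  have key: "a t v - a t (sig n k v) - a t (tau n k v) + a t (sig n k (tau n k v))
              = uu n k v * ww n k v * q2 t v" if "t < k" "v \<in> Xrss n" for t v
  proof -
    have tv: "tau n k v \<in> Xrss n" by (rule tau_X[OF that(2)])
    have h2: "a t (sig n k (tau n k v)) = a t (tau n k v) - uu n k v * (q1 t v - ww n k v * q2 t v)"
      using q1(2)[OF that(1) tv] q2(2)[OF that] uu_tau[OF that(2)] by simp
    have h1: "a t (sig n k v) = a t v - uu n k v * q1 t v" using q1(2)[OF that] by simp
    show ?thesis by (simp only: h1 h2) (simp add: algebra_simps)
  qed
  have van: "(\<Sum>t<k. a t (X v) * Ffun n t v) = 0"
    if "X v \<in> Xrss n" "Ffun n k (X v) = 0" "\<And>t. t < k \<Longrightarrow> Ffun n t (X v) = Ffun n t v" for X v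
  proof -
    have "(\<Sum>t<k. a t (X v) * Ffun n t v) = (\<Sum>t<k. a t (X v) * Ffun n t (X v))"
      using that(3) by simp
    also have "\<dots> = g (X v) * Ffun n k (X v)" using a(2) that(1) by simp
    finally show ?thesis using that(2) by simp
  qed
  define e where "e = (\<lambda>v. g v - (\<Sum>t<k. q2 t v * Ffun n t v))"
  have re: "regular_fun n e" unfolding e_def
    using k by (intro reg_diff g reg_sum reg_mult q2(1) reg_F) auto
  have "e v * uu n k v * ww n k v = 0" if v: "v \<in> Xrss n" for v
  proof -
    have sv: "sig n k v \<in> Xrss n" and tv: "tau n k v \<in> Xrss n" and stv: "sig n k (tau n k v) \<in> Xrss n"
      using sig_X[OF k] tau_X v by auto
    have z1: "(\<Sum>t<k. a t (sig n k v) * Ffun n t v) = 0"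
      by (rule van[where X="sig n k"]) (use sv Fk_sig[OF k v] F_sig k v in auto)
    have z2: "(\<Sum>t<k. a t (tau n k v) * Ffun n t v) = 0"
      by (rule van[where X="tau n k"]) (use tv Fk_tau[OF k v] F_tau k v in auto)
    have z3: "(\<Sum>t<k. a t (sig n k (tau n k v)) * Ffun n t v) = 0"
      by (rule van[where X="\<lambda>v. sig n k (tau n k v)"])
         (use stv Fk_sig[OF k tv] F_sig[OF _ k tv] F_tau[OF _ k v] in auto)
    have "uu n k v * ww n k v * (\<Sum>t<k. q2 t v * Ffun n t v)
        = (\<Sum>t<k. (a t v - a t (sig n k v) - a t (tau n k v) + a t (sig n k (tau n k v))) * Ffun n t v)"
      using key v by (simp add: sum_distrib_left mult.assoc)
    also have "\<dots> = (\<Sum>t<k. a t v * Ffun n t v) - (\<Sum>t<k. a t (sig n k v) * Ffun n t v)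
        - (\<Sum>t<k. a t (tau n k v) * Ffun n t v) + (\<Sum>t<k. a t (sig n k (tau n k v)) * Ffun n t v)"
      by (simp add: algebra_simps sum.distrib sum_subtractf)
    also have "\<dots> = g v * Ffun n k v" using z1 z2 z3 a(2) v by simp
    also have "\<dots> = g v * (uu n k v * ww n k v)" using F_eq[OF k] by simp
    finally have "uu n k v * ww n k v * (\<Sum>t<k. q2 t v * Ffun n t v) = g v * (uu n k v * ww n k v)" .
    then show ?thesis unfolding e_def by (simp add: algebra_simps) auto
  qed
  then have "\<forall>v\<in>Xrss n. e v = 0" using density[OF k re] by blast
  then show ?thesis unfolding in_ideal_def e_def using q2(1)
    by (intro exI[of _ q2]) auto
qed

definition v0 :: "nat \<Rightarrow> point" where
  "v0 n = (\<lambda>x. case x of Rv a b \<Rightarrow> if a = b \<and> a < n then of_nat a else 0 | _ \<Rightarrow> 0)"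

lemma v0_X: "v0 n \<in> Xrss n"
  unfolding Xrss_def v0_def by (auto split: var.splits)

lemma F_v0: "Ffun n t (v0 n) = 0"
  unfolding Ffun_def v0_def by simp

theorem mainTheorem14:
  fixes n :: nat
  shows "regular_sequence n (Ffun n) n"
  unfolding regular_sequence_def
proof (intro conjI allI impI)
  show "\<And>t. t < n \<Longrightarrow> regular_fun n (Ffun n t)" by (rule reg_F)
  show "\<And>k g. k < n \<Longrightarrow> regular_fun n g \<Longrightarrow> in_ideal n (Ffun n) k (\<lambda>v. g v * Ffun n k v) \<Longrightarrow>
          in_ideal n (Ffun n) k g" by (rule step)
  show "\<not> in_ideal n (Ffun n) n (\<lambda>v. 1)"
  proof
    assume "in_ideal n (Ffun n) n (\<lambda>v. 1)"
    then obtain a where "\<forall>v\<in>Xrss n. 1 = (\<Sum>t<n. a t v * Ffun n t v)" unfolding in_ideal_def by blast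
    then have "1 = (\<Sum>t<n. a t (v0 n) * Ffun n t (v0 n))" using v0_X by blast
    then show False by (simp add: F_v0)
  qed
qed

end
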